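(* Let $\mathcal F=\{F_1,\dots,F_k\}$, $\mathcal I_0=\{0,1\}^k$, $\mathcal I=\mathcal I_0\setminus\{\boldsymbol 0\}$, $I=2^k-1$, and let $\mathcal F_{asc}$ be a nonempty ascending class of nonempty subsets of $\mathcal F$, with $\mathcal F_{des}=2^{\mathcal F}\setminus\mathcal F_{asc}\setminus\{\varnothing\}$. Let $\mathbf A$ be the $|\mathcal F_{des}|\times I$ matrix with entry $1$ in row $W\in\mathcal F_{des}$, column $\boldsymbol i\in\mathcal I$ if $W\subseteq\phi(\boldsymbol i)$ and $0$ otherwise, and let $$\mathbf A_1=\begin{pmatrix}\boldsymbol 1^\top\\ \mathbf A\end{pmatrix},\qquad \mathbf A_0=\begin{pmatrix}1&\boldsymbol 1^\top\\ \boldsymbol 0&\mathbf A\end{pmatrix},$$ of sizes $(|\mathcal F_{des}|+1)\times I$ and $(|\mathcal F_{des}|+1)\times(I+1)$, where the first column of $\mathbf A_0$ corresponds to the zero cell $\boldsymbol 0$. Then: (i) $HAS(\mathcal F_{asc})$ and $QLL(\mathcal F_{asc})$ are the relational models on $\mathcal I$ generated by $\mathbf A$ and $\mathbf A_1$, respectively; (ii) $LL(\mathcal F_{asc})$ is the relational model on $\mathcal I_0$ generated by $\mathbf A_0$; (iii) $HAS(\mathcal F_{asc})$ and $LL(\mathcal F_{asc})$ each have $|\mathcal F_{asc}|$ degrees of freedom, and $QLL(\mathcal F_{asc})$ has $|\mathcal F_{asc}|-1$ degrees of freedom.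
   Context: For a cell $\boldsymbol i$, $\phi(\boldsymbol i)$ is the set of features whose coordinate in $\boldsymbol i$ is $1$ ($\phi(\boldsymbol 0)=\varnothing$). An ascending class is closed under supersets within $\mathcal F$. The relational model on a finite sample space $\mathcal T$ generated by a 0–1 matrix $\mathbf M$ with columns indexed by $\mathcal T$ is the set of strictly positive probability distributions $\boldsymbol p$ on $\mathcal T$ with $\log\boldsymbol p=\mathbf M^\top\boldsymbol\beta$ for some $\boldsymbol\beta$; its number of degrees of freedom is $|\mathcal T|-\mathrm{rank}(\mathbf M)$. $HAS(\mathcal F_{asc})$: strictly positive distributions $\boldsymbol p$ on $\mathcal I$ such that, writing $\log p(\boldsymbol i)=\sum_{\varnothing\neq V\subseteq\phi(\boldsymbol i)}\beta_V$ (a unique representation), $\beta_V=0$ for all $V\in\mathcal F_{asc}$ (equivalently, all conditional Aitchison–Silvey ratios $\mathrm{CASR}(V\mid\mathcal F\setminus V=\mathbf 0)=\prod_{\varnothing\ne U\subseteq V,|U|\equiv|V|(2)}p(U)/\prod_{\varnothing\ne U\subseteq V,|U|\not\equiv|V|(2)}p(U)$ equal $1$ for $V\in\mathcal F_{asc}$). $LL(\mathcal F_{asc})$: strictly positive distributions $\boldsymbol p$ on $\mathcal I_0$ such that, writing $\log p(\boldsymbol i)=\sum_{V\subseteq\phi(\boldsymbol i)}\beta_V$ ($V$ ranging over all subsets including $\varnothing$), $\beta_V=0$ for all $V\in\mathcal F_{asc}$ (the hierarchical log-linear model). $QLL(\mathcal F_{asc})$: the set of distributions $\boldsymbol\pi$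 on $\mathcal I$ of the form $\pi(\boldsymbol i)=p(\boldsymbol i)/\sum_{\boldsymbol j\in\mathcal I}p(\boldsymbol j)$ for some $\boldsymbol p\in LL(\mathcal F_{asc})$. *)

theory Defs
  imports Complex_Main "HOL-Library.Function_Algebras"
begin

text \<open>Cells of the table: a cell i in {0,1}^k is identified with the set
  phi(i) of features (indices in {0..<k}) whose coordinate is 1.
  Distributions on a finite sample space T are functions vanishing outside T.\<close>

definition features :: "nat \<Rightarrow> nat set" where
  "features k = {0..<k}"

definition cells0 :: "nat \<Rightarrow> nat set set" where
  "cells0 k = Pow (features k)"

definition cells :: "nat \<Rightarrow> nat set set" where
  "cells k = Pow (features k) - {{}}"

definition ascending_class :: "nat \<Rightarrow> nat set set \<Rightarrow> bool" where
  "ascending_class k Fa \<longleftrightarrow> Fa \<subseteq> Pow (features k) \<and>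
     (\<forall>V\<in>Fa. \<forall>W. V \<subseteq> W \<and> W \<subseteq> features k \<longrightarrow> W \<in> Fa)"

definition Fdes :: "nat \<Rightarrow> nat set set \<Rightarrow> nat set set" where
  "Fdes k Fa = Pow (features k) - Fa - {{}}"

definition pos_dist :: "'c set \<Rightarrow> ('c \<Rightarrow> real) \<Rightarrow> bool" where
  "pos_dist T p \<longleftrightarrow> (\<forall>t\<in>T. p t > 0) \<and> (\<forall>t. t \<notin> T \<longrightarrow> p t = 0) \<and> sum p T = 1"

definition relational_model :: "'c set \<Rightarrow> 'r set \<Rightarrow> ('r \<Rightarrow> 'c \<Rightarrow> real) \<Rightarrow> ('c \<Rightarrow> real) set" where
  "relational_model T R M = {p. pos_dist T p \<and>
      (\<exists>\<beta> :: 'r \<Rightarrow> real. \<forall>t\<in>T. ln (p t) = (\<Sum>r\<in>R. M r t * \<beta> r))}"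

definition mat_rank :: "'c set \<Rightarrow> 'r set \<Rightarrow> ('r \<Rightarrow> 'c \<Rightarrow> real) \<Rightarrow> nat" where
  "mat_rank T R M = vector_space.dim (\<lambda>(c::real) (f::'c \<Rightarrow> real). (\<lambda>x. c * f x))
      ((\<lambda>r. \<lambda>t. if t \<in> T then M r t else 0) ` R)"

definition degrees_of_freedom :: "'c set \<Rightarrow> 'r set \<Rightarrow> ('r \<Rightarrow> 'c \<Rightarrow> real) \<Rightarrow> nat" where
  "degrees_of_freedom T R M = card T - mat_rank T R M"

text \<open>The matrices A, A_1, A_0. Rows of A_1, A_0: None = the first row, Some W for W in F_des.\<close>
definition matA :: "nat set \<Rightarrow> nat set \<Rightarrow> real" where
  "matA W i = (if W \<subseteq> i then 1 else 0)"

definition matA1 :: "nat set option \<Rightarrow> nat set \<Rightarrow> real" where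
  "matA1 r i = (case r of None \<Rightarrow> 1 | Some W \<Rightarrow> matA W i)"

definition matA0 :: "nat set option \<Rightarrow> nat set \<Rightarrow> real" where
  "matA0 r i = (case r of None \<Rightarrow> 1 | Some W \<Rightarrow> (if i = {} then 0 else matA W i))"

definition rowsA :: "nat \<Rightarrow> nat set set \<Rightarrow> nat set set" where
  "rowsA k Fa = Fdes k Fa"

definition rowsA1 :: "nat \<Rightarrow> nat set set \<Rightarrow> nat set option set" where
  "rowsA1 k Fa = insert None (Some ` Fdes k Fa)"

definition HAS :: "nat \<Rightarrow> nat set set \<Rightarrow> (nat set \<Rightarrow> real) set" where
  "HAS k Fa = {p. pos_dist (cells k) p \<and>
     (\<exists>\<beta> :: nat set \<Rightarrow> real.
        (\<forall>i\<in>cells k. ln (p i) = (\<Sum>V\<in>Pow i - {{}}. \<beta> V)) \<and>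
        (\<forall>V\<in>Fa. \<beta> V = 0))}"

definition LL :: "nat \<Rightarrow> nat set set \<Rightarrow> (nat set \<Rightarrow> real) set" where
  "LL k Fa = {p. pos_dist (cells0 k) p \<and>
     (\<exists>\<beta> :: nat set \<Rightarrow> real.
        (\<forall>i\<in>cells0 k. ln (p i) = (\<Sum>V\<in>Pow i. \<beta> V)) \<and>
        (\<forall>V\<in>Fa. \<beta> V = 0))}"

definition QLL :: "nat \<Rightarrow> nat set set \<Rightarrow> (nat set \<Rightarrow> real) set" where
  "QLL k Fa = {\<pi>. \<exists>p\<in>LL k Fa.
      \<forall>i. \<pi> i = (if i \<in> cells k then p i / (\<Sum>j\<in>cells k. p j) else 0)}"

end

theory Submission
  imports Defs
begin

abbreviation fscale :: "real \<Rightarrow> ('c \<Rightarrow> real) \<Rightarrow> ('c \<Rightarrow> real)" where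
  "fscale \<equiv> (\<lambda>(c::real) (f::'c \<Rightarrow> real). (\<lambda>x. c * f x))"

lemma vs_fun: "vector_space (fscale :: real \<Rightarrow> ('c \<Rightarrow> real) \<Rightarrow> _)"
  by unfold_locales (auto simp: fun_eq_iff algebra_simps)

lemma sum_fun_apply: "finite A \<Longrightarrow> (\<Sum>v\<in>A. (g v :: 'c \<Rightarrow> real)) x = (\<Sum>v\<in>A. g v x)"
  by (induction A rule: finite_induct) auto

lemma rank_indep:
  fixes M :: "'r \<Rightarrow> 'c \<Rightarrow> real"
  assumes fin: "finite R"
    and ind: "\<And>b. (\<forall>t\<in>T. (\<Sum>r\<in>R. b r * M r t) = 0) \<Longrightarrow> (\<forall>r\<in>R. b r = 0)"
  shows "mat_rank T R M = card R"
proof -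
  interpret vs: vector_space "fscale :: real \<Rightarrow> ('c \<Rightarrow> real) \<Rightarrow> _" by (rule vs_fun)
  define f where "f = (\<lambda>r. \<lambda>t. if t \<in> T then M r t else 0)"
  have inj: "inj_on f R"
  proof (rule inj_onI, rule ccontr)
    fix r1 r2 assume r: "r1 \<in> R" "r2 \<in> R" "f r1 = f r2" "r1 \<noteq> r2"
    define b where "b = (\<lambda>r. if r = r1 then (1::real) else if r = r2 then -1 else 0)"
    have "\<forall>t\<in>T. (\<Sum>r\<in>R. b r * M r t) = 0"
    proof
      fix t assume t: "t \<in> T"
      have "(\<Sum>r\<in>R. b r * M r t) = (\<Sum>r\<in>{r1,r2}. b r * M r t)"
        by (rule sum.mono_neutral_right) (use fin r in \<open>auto simp: b_def\<close>)
      also have "\<dots> = M r1 t - M r2 t" using r by (simp add: b_def)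
      also have "\<dots> = 0" using fun_cong[OF r(3), of t] t by (simp add: f_def)
      finally show "(\<Sum>r\<in>R. b r * M r t) = 0" .
    qed
    from ind[OF this] r show False by (auto simp: b_def)
  qed
  have "vs.independent (f ` R)"
    unfolding vs.dependent_explicit
  proof clarify
    fix s u v assume s: "finite s" "s \<subseteq> f ` R" and z: "(\<Sum>v\<in>s. fscale (u v) v) = 0"
      and v: "v \<in> s" "u v \<noteq> 0"
    define R' where "R' = {r\<in>R. f r \<in> s}"
    have sR: "s = f ` R'" using s by (auto simp: R'_def)
    have injR': "inj_on f R'" using inj by (rule inj_on_subset) (auto simp: R'_def)
    define b where "b = (\<lambda>r. if r \<in> R' then u (f r) else 0)"
    have bz: "\<forall>t\<in>T. (\<Sum>r\<in>R. b r * M r t) = 0"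
    proof
      fix t assume t: "t \<in> T"
      have "(\<Sum>r\<in>R. b r * M r t) = (\<Sum>r\<in>R'. u (f r) * M r t)"
        by (rule sum.mono_neutral_cong_right) (use fin in \<open>auto simp: b_def R'_def\<close>)
      also have "\<dots> = (\<Sum>r\<in>R'. fscale (u (f r)) (f r)) t"
        using fin t by (subst sum_fun_apply) (simp_all add: f_def R'_def)
      also have "\<dots> = (\<Sum>v\<in>s. fscale (u v) v) t"
        unfolding sR by (subst sum.reindex[OF injR']) simp
      also have "\<dots> = 0" using z by simp
      finally show "(\<Sum>r\<in>R. b r * M r t) = 0" .
    qed
    from v(1) sR obtain r where r: "r \<in> R'" "v = f r" by blast
    then have "r \<in> R" by (simp add: R'_def)
    with ind[OF bz] have "b r = 0" by blast
    then show False using r v(2) by (simp add: b_def)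
  qed
  then have "vs.dim (f ` R) = card (f ` R)" by (rule vs.dim_eq_card_independent)
  then show ?thesis using card_image[OF inj] by (simp add: mat_rank_def f_def)
qed


lemma alt_sum:
  assumes "finite D"
  shows "(\<Sum>S\<in>Pow D. (-1::real) ^ card (D - S)) = (if D = {} then 1 else 0)"
  using assms
proof (induction D rule: finite_induct)
  case empty then show ?case by simp
next
  case (insert a D)
  have disj: "Pow D \<inter> insert a ` Pow D = {}" using insert by auto
  have inj: "inj_on (insert a) (Pow D)" using insert
    by (auto simp: inj_on_def)
  have "(\<Sum>S\<in>Pow (insert a D). (-1::real) ^ card (insert a D - S))
     = (\<Sum>S\<in>Pow D. (-1::real) ^ card (insert a D - S)) + (\<Sum>S\<in>insert a ` Pow D. (-1::real) ^ card (insert a D - S))"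
    unfolding Pow_insert using insert disj by (intro sum.union_disjoint) auto
  also have "(\<Sum>S\<in>insert a ` Pow D. (-1::real) ^ card (insert a D - S)) = (\<Sum>S\<in>Pow D. (-1::real) ^ card (D - S))"
    using inj insert by (subst sum.reindex) (auto intro!: sum.cong simp: insert_Diff_if)
  also have "(\<Sum>S\<in>Pow D. (-1::real) ^ card (insert a D - S)) = (\<Sum>S\<in>Pow D. - ((-1::real) ^ card (D - S)))"
  proof (rule sum.cong)
    fix S assume "S \<in> Pow D"
    then have "insert a D - S = insert a (D - S)" "a \<notin> D - S" using insert by auto
    then show "(-1::real) ^ card (insert a D - S) = - ((-1::real) ^ card (D - S))"
      using insert by simp
  qed simp
  finally show ?case by (simp add: sum_negf)
qed

lemma K:
  assumes "finite F" "W \<subseteq> F"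
  shows "(\<Sum>i\<in>Pow F. (-1::real) ^ card (F - i) * matA W i) = (if W = F then 1 else 0)"
proof -
  have "(\<Sum>i\<in>Pow F. (-1::real) ^ card (F - i) * matA W i) = (\<Sum>i\<in>{i\<in>Pow F. W \<subseteq> i}. (-1::real) ^ card (F - i))"
    using assms by (subst sum.inter_filter) (auto simp: matA_def intro!: sum.cong)
  also have "{i\<in>Pow F. W \<subseteq> i} = (\<lambda>S. W \<union> S) ` Pow (F - W)"
  proof (rule set_eqI, rule iffI)
    fix i assume "i \<in> {i\<in>Pow F. W \<subseteq> i}"
    then have "i = W \<union> (i - W)" "i - W \<in> Pow (F - W)" by auto
    then show "i \<in> (\<lambda>S. W \<union> S) ` Pow (F - W)" by (rule image_eqI)
  next
    fix i assume "i \<in> (\<lambda>S. W \<union> S) ` Pow (F - W)"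
    then show "i \<in> {i\<in>Pow F. W \<subseteq> i}" using assms by auto
  qed
  also have "(\<Sum>i\<in>(\<lambda>S. W \<union> S) ` Pow (F - W). (-1::real) ^ card (F - i)) = (\<Sum>S\<in>Pow (F - W). (-1::real) ^ card ((F - W) - S))"
  proof (subst sum.reindex)
    show "inj_on (\<lambda>S. W \<union> S) (Pow (F - W))"
    proof (rule inj_onI)
      fix x y assume "x \<in> Pow (F - W)" "y \<in> Pow (F - W)" "W \<union> x = W \<union> y"
      then have "x = (W \<union> x) - W" "y = (W \<union> y) - W" by auto
      then show "x = y" using \<open>W \<union> x = W \<union> y\<close> by simp
    qed
    show "(\<Sum>S\<in>Pow (F - W). ((\<lambda>i. (-1::real) ^ card (F - i)) \<circ> (\<lambda>S. W \<union> S)) S) = (\<Sum>S\<in>Pow (F - W). (-1::real) ^ card ((F - W) - S))"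
      by (intro sum.cong refl) (simp only: comp_def Diff_eq Un_Int_distrib Compl_Un Int_assoc)
  qed
  also have "\<dots> = (if W = F then 1 else 0)" using assms by (subst alt_sum) auto
  finally show ?thesis .
qed

lemma L1:
  assumes "finite R" "R \<subseteq> cells k"
    and z: "\<forall>i\<in>cells k. (\<Sum>W\<in>R. b W * matA W i) = 0"
  shows "\<forall>W\<in>R. b W = 0"
proof -
  have "\<forall>W. card W = n \<longrightarrow> W \<in> R \<longrightarrow> b W = 0" for n
  proof (induction n rule: less_induct)
    case (less n)
    show ?case
    proof (intro allI impI)
      fix W assume W: "card W = n" "W \<in> R"
      have fW: "finite W" using W assms by (auto simp: cells_def features_def intro: finite_subset)
      have "0 = (\<Sum>W'\<in>R. b W' * matA W' W)" using z W assms by auto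
      also have "\<dots> = b W * matA W W + (\<Sum>W'\<in>R - {W}. b W' * matA W' W)"
        using W assms by (simp add: sum.remove)
      also have "(\<Sum>W'\<in>R - {W}. b W' * matA W' W) = 0"
      proof (rule sum.neutral, rule ballI)
        fix W' assume W': "W' \<in> R - {W}"
        show "b W' * matA W' W = 0"
        proof (cases "W' \<subseteq> W")
          case True
          then have "card W' < n" using W W' fW by (metis DiffE psubsetI psubset_card_mono singletonI)
          then show ?thesis using less W' by auto
        qed (simp add: matA_def)
      qed
      finally show "b W = 0" by (simp add: matA_def)
    qed
  qed
  then show ?thesis by blast
qed


lemma finite_features[simp]: "finite (features k)" by (simp add: features_def)
lemma finite_cells[simp]: "finite (cells k)" by (simp add: cells_def)
lemma finite_cells0[simp]: "finite (cells0 k)" by (simp add: cells0_def)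
lemma finite_Fdes[simp]: "finite (Fdes k Fa)" by (simp add: Fdes_def)

lemma ones_indep:
  assumes Fne: "features k \<noteq> {}" and R: "finite R" "R \<subseteq> cells k" "features k \<notin> R"
    and z: "\<forall>i\<in>cells k. c + (\<Sum>W\<in>R. b W * matA W i) = 0"
  shows "c = 0"
proof -
  define F where "F = features k"
  define g where "g i = c + (\<Sum>W\<in>R. b W * matA W i)" for i
  define L where "L = (\<Sum>i\<in>Pow F. (-1::real) ^ card (F - i) * g i)"
  have RF: "W \<subseteq> F" "W \<noteq> {}" "W \<noteq> F" if "W \<in> R" for W
    using R that by (auto simp: cells_def F_def)
  have g0: "g {} = c" unfolding g_def
    by (auto intro!: sum.neutral simp: matA_def dest: RF(2))
  have "L = (-1::real) ^ card (F - {}) * g {} + (\<Sum>i\<in>Pow F - {{}}. (-1::real) ^ card (F - i) * g i)"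
    unfolding L_def by (subst sum.remove[of _ "{}"]) (auto simp: F_def)
  also have "(\<Sum>i\<in>Pow F - {{}}. (-1::real) ^ card (F - i) * g i) = 0"
    using z by (intro sum.neutral) (auto simp: g_def cells_def F_def)
  finally have La: "L = (-1::real) ^ card F * c" using g0 by simp
  have "L = (\<Sum>i\<in>Pow F. c * ((-1::real) ^ card (F - i) * matA {} i) + (\<Sum>W\<in>R. b W * ((-1::real) ^ card (F - i) * matA W i)))"
    unfolding L_def g_def by (intro sum.cong refl) (simp add: matA_def algebra_simps sum_distrib_left)
  also have "\<dots> = c * (\<Sum>i\<in>Pow F. (-1::real) ^ card (F - i) * matA {} i) + (\<Sum>W\<in>R. b W * (\<Sum>i\<in>Pow F. (-1::real) ^ card (F - i) * matA W i))"
    by (simp add: sum.distrib sum_distrib_left sum.swap[of _ "Pow F"])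
  also have "(\<Sum>i\<in>Pow F. (-1::real) ^ card (F - i) * matA {} i) = 0"
    using Fne by (subst K) (auto simp: F_def)
  also have "(\<Sum>W\<in>R. b W * (\<Sum>i\<in>Pow F. (-1::real) ^ card (F - i) * matA W i)) = 0"
  proof (intro sum.neutral ballI)
    fix W assume "W \<in> R"
    have fF: "finite F" by (simp add: F_def)
    show "b W * (\<Sum>i\<in>Pow F. (-1::real) ^ card (F - i) * matA W i) = 0"
      using RF[OF \<open>W \<in> R\<close>] fF by (subst K) auto
  qed
  finally have "L = 0" by simp
  with La show "c = 0" by simp
qed


lemma S1:
  assumes "i \<subseteq> features k" "\<forall>V\<in>Fa. \<gamma> V = 0"
  shows "(\<Sum>V\<in>Pow i - {{}}. \<gamma> V) = (\<Sum>W\<in>Fdes k Fa. matA W i * \<gamma> W)"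
proof -
  have fi: "finite i" using assms(1) finite_features finite_subset by blast
  have "(\<Sum>W\<in>Fdes k Fa. matA W i * \<gamma> W) = (\<Sum>W\<in>{W\<in>Fdes k Fa. W \<subseteq> i}. \<gamma> W)"
    by (subst sum.inter_filter) (auto simp: matA_def intro!: sum.cong)
  also have "\<dots> = (\<Sum>V\<in>Pow i - {{}}. \<gamma> V)"
    by (rule sum.mono_neutral_left) (use fi assms in \<open>auto simp: Fdes_def\<close>)
  finally show ?thesis by simp
qed

lemma S2: "(\<Sum>r\<in>rowsA1 k Fa. g r) = g None + (\<Sum>W\<in>Fdes k Fa. g (Some W))"
  unfolding rowsA1_def by (simp add: sum.reindex)

lemma matA0_Some: "W \<noteq> {} \<Longrightarrow> matA0 (Some W) i = matA W i"
  by (auto simp: matA0_def matA_def)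

lemma matA0_None: "matA0 None i = 1" by (simp add: matA0_def)

lemma Fdes_ne: "W \<in> Fdes k Fa \<Longrightarrow> W \<noteq> {}" by (simp add: Fdes_def)


lemma sum_Pow_split: "finite t \<Longrightarrow> (\<Sum>V\<in>Pow t. \<gamma> V) = \<gamma> {} + (\<Sum>V\<in>Pow t - {{}}. \<gamma> V)"
  by (subst sum.remove[of _ "{}"]) auto

lemma cells_sub: "i \<in> cells k \<Longrightarrow> i \<subseteq> features k" by (simp add: cells_def)
lemma cells0_sub: "i \<in> cells0 k \<Longrightarrow> i \<subseteq> features k" by (simp add: cells0_def)
lemma cells_cells0: "cells k \<subseteq> cells0 k" by (auto simp: cells_def cells0_def)
lemma fin_sub: "i \<subseteq> features k \<Longrightarrow> finite i" using finite_features finite_subset by blast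

lemma LL_eq:
  assumes "{} \<notin> Fa"
  shows "LL k Fa = relational_model (cells0 k) (rowsA1 k Fa) matA0"
proof (rule set_eqI, rule iffI)
  fix p assume "p \<in> LL k Fa"
  then obtain \<beta> where pd: "pos_dist (cells0 k) p"
    and b: "\<forall>i\<in>cells0 k. ln (p i) = (\<Sum>V\<in>Pow i. \<beta> V)" and b0: "\<forall>V\<in>Fa. \<beta> V = 0"
    by (auto simp: LL_def)
  define bb where "bb r = (case r of None \<Rightarrow> \<beta> {} | Some W \<Rightarrow> \<beta> W)" for r
  have "\<forall>t\<in>cells0 k. ln (p t) = (\<Sum>r\<in>rowsA1 k Fa. matA0 r t * bb r)"
  proof
    fix t assume t: "t \<in> cells0 k"
    have "(\<Sum>r\<in>rowsA1 k Fa. matA0 r t * bb r) = \<beta> {} + (\<Sum>W\<in>Fdes k Fa. matA0 (Some W) t * \<beta> W)"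
      by (simp add: S2 bb_def matA0_def)
    also have "(\<Sum>W\<in>Fdes k Fa. matA0 (Some W) t * \<beta> W) = (\<Sum>W\<in>Fdes k Fa. matA W t * \<beta> W)"
      by (intro sum.cong refl) (simp add: matA0_Some Fdes_ne)
    also have "\<dots> = (\<Sum>V\<in>Pow t - {{}}. \<beta> V)"
      using t b0 by (intro S1[symmetric]) (auto dest: cells0_sub)
    also have "\<beta> {} + \<dots> = (\<Sum>V\<in>Pow t. \<beta> V)"
      using t by (intro sum_Pow_split[symmetric] fin_sub cells0_sub)
    finally show "ln (p t) = (\<Sum>r\<in>rowsA1 k Fa. matA0 r t * bb r)" using b t by simp
  qed
  then show "p \<in> relational_model (cells0 k) (rowsA1 k Fa) matA0"
    unfolding relational_model_def using pd by blast
next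
  fix p assume "p \<in> relational_model (cells0 k) (rowsA1 k Fa) matA0"
  then obtain bb where pd: "pos_dist (cells0 k) p"
    and b: "\<forall>t\<in>cells0 k. ln (p t) = (\<Sum>r\<in>rowsA1 k Fa. matA0 r t * bb r)"
    by (auto simp: relational_model_def)
  define \<gamma> where "\<gamma> V = (if V \<in> Fa then 0 else if V = {} then bb None else bb (Some V))" for V
  have g0: "\<forall>V\<in>Fa. \<gamma> V = 0" by (simp add: \<gamma>_def)
  have "\<forall>t\<in>cells0 k. ln (p t) = (\<Sum>V\<in>Pow t. \<gamma> V)"
  proof
    fix t assume t: "t \<in> cells0 k"
    have "(\<Sum>r\<in>rowsA1 k Fa. matA0 r t * bb r) = bb None + (\<Sum>W\<in>Fdes k Fa. matA0 (Some W) t * bb (Some W))"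
      by (simp add: S2 matA0_def)
    also have "(\<Sum>W\<in>Fdes k Fa. matA0 (Some W) t * bb (Some W)) = (\<Sum>W\<in>Fdes k Fa. matA W t * \<gamma> W)"
      by (intro sum.cong refl) (auto simp: matA0_Some Fdes_ne \<gamma>_def Fdes_def)
    also have "\<dots> = (\<Sum>V\<in>Pow t - {{}}. \<gamma> V)"
      using t g0 by (intro S1[symmetric]) (auto dest: cells0_sub)
    also have "bb None = \<gamma> {}" using assms by (simp add: \<gamma>_def)
    also have "\<gamma> {} + (\<Sum>V\<in>Pow t - {{}}. \<gamma> V) = (\<Sum>V\<in>Pow t. \<gamma> V)"
      using t by (intro sum_Pow_split[symmetric] fin_sub cells0_sub)
    finally show "ln (p t) = (\<Sum>V\<in>Pow t. \<gamma> V)" using b t by simp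
  qed
  then show "p \<in> LL k Fa" unfolding LL_def using pd g0 by blast
qed

lemma HAS_eq:
  shows "HAS k Fa = relational_model (cells k) (rowsA k Fa) matA"
proof (rule set_eqI, rule iffI)
  fix p assume "p \<in> HAS k Fa"
  then obtain \<beta> where pd: "pos_dist (cells k) p"
    and b: "\<forall>i\<in>cells k. ln (p i) = (\<Sum>V\<in>Pow i - {{}}. \<beta> V)" and b0: "\<forall>V\<in>Fa. \<beta> V = 0"
    by (auto simp: HAS_def)
  have "\<forall>t\<in>cells k. ln (p t) = (\<Sum>r\<in>rowsA k Fa. matA r t * \<beta> r)"
    using b b0 by (auto simp: rowsA_def intro!: S1 dest: cells_sub)
  then show "p \<in> relational_model (cells k) (rowsA k Fa) matA"
    unfolding relational_model_def using pd by blast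
next
  fix p assume "p \<in> relational_model (cells k) (rowsA k Fa) matA"
  then obtain \<beta> where pd: "pos_dist (cells k) p"
    and b: "\<forall>t\<in>cells k. ln (p t) = (\<Sum>r\<in>Fdes k Fa. matA r t * \<beta> r)"
    by (auto simp: relational_model_def rowsA_def)
  define \<gamma> where "\<gamma> V = (if V \<in> Fa then 0 else \<beta> V)" for V
  have g0: "\<forall>V\<in>Fa. \<gamma> V = 0" by (simp add: \<gamma>_def)
  have "\<forall>i\<in>cells k. ln (p i) = (\<Sum>V\<in>Pow i - {{}}. \<gamma> V)"
  proof
    fix i assume i: "i \<in> cells k"
    have "(\<Sum>V\<in>Pow i - {{}}. \<gamma> V) = (\<Sum>W\<in>Fdes k Fa. matA W i * \<gamma> W)"
      using i g0 by (intro S1) (auto dest: cells_sub)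
    also have "\<dots> = (\<Sum>W\<in>Fdes k Fa. matA W i * \<beta> W)"
      by (intro sum.cong refl) (auto simp: \<gamma>_def Fdes_def)
    finally show "ln (p i) = (\<Sum>V\<in>Pow i - {{}}. \<gamma> V)" using b i by simp
  qed
  then show "p \<in> HAS k Fa" unfolding HAS_def using pd g0 by blast
qed


lemma QLL_eq:
  assumes "{} \<notin> Fa" "features k \<noteq> {}"
  shows "QLL k Fa = relational_model (cells k) (rowsA1 k Fa) matA1"
proof (rule set_eqI, rule iffI)
  have Fc: "features k \<in> cells k" using assms by (simp add: cells_def)
  fix \<pi> assume "\<pi> \<in> QLL k Fa"
  then obtain p where pL: "p \<in> LL k Fa"
    and pi: "\<forall>i. \<pi> i = (if i \<in> cells k then p i / (\<Sum>j\<in>cells k. p j) else 0)"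
    by (auto simp: QLL_def)
  from pL obtain b where pd: "pos_dist (cells0 k) p"
    and b: "\<forall>t\<in>cells0 k. ln (p t) = (\<Sum>r\<in>rowsA1 k Fa. matA0 r t * b r)"
    unfolding LL_eq[OF assms(1)] by (auto simp: relational_model_def)
  define S where "S = (\<Sum>j\<in>cells k. p j)"
  have ppos: "p i > 0" if "i \<in> cells k" for i using pd that cells_cells0 by (auto simp: pos_dist_def)
  have Spos: "S > 0" unfolding S_def using Fc ppos by (intro sum_pos) auto
  have pdpi: "pos_dist (cells k) \<pi>"
    unfolding pos_dist_def
  proof (intro conjI ballI allI impI)
    fix t assume t: "t \<in> cells k"
    have "\<pi> t = p t / S" using t pi by (simp add: S_def)
    then show "\<pi> t > 0" using t ppos Spos by simp
  next
    fix t assume "t \<notin> cells k" then show "\<pi> t = 0" using pi by simp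
  next
    have "sum \<pi> (cells k) = (\<Sum>i\<in>cells k. p i / S)" using pi by (simp add: S_def)
    also have "\<dots> = 1" using Spos by (simp add: sum_divide_distrib[symmetric] S_def)
    finally show "sum \<pi> (cells k) = 1" .
  qed
  define b' where "b' r = (case r of None \<Rightarrow> b None - ln S | Some W \<Rightarrow> b (Some W))" for r
  have "\<forall>t\<in>cells k. ln (\<pi> t) = (\<Sum>r\<in>rowsA1 k Fa. matA1 r t * b' r)"
  proof
    fix t assume t: "t \<in> cells k"
    have "\<pi> t = p t / S" using t pi by (simp add: S_def)
    then have "ln (\<pi> t) = ln (p t) - ln S" using ppos[OF t] Spos by (simp add: ln_div)
    also have "ln (p t) = b None + (\<Sum>W\<in>Fdes k Fa. matA0 (Some W) t * b (Some W))"
      using b t cells_cells0 by (auto simp: S2 matA0_def)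
    also have "(\<Sum>W\<in>Fdes k Fa. matA0 (Some W) t * b (Some W)) = (\<Sum>W\<in>Fdes k Fa. matA1 (Some W) t * b' (Some W))"
      by (intro sum.cong refl) (simp add: matA0_Some Fdes_ne matA1_def b'_def)
    finally show "ln (\<pi> t) = (\<Sum>r\<in>rowsA1 k Fa. matA1 r t * b' r)"
      by (simp add: S2 matA1_def b'_def)
  qed
  then show "\<pi> \<in> relational_model (cells k) (rowsA1 k Fa) matA1"
    unfolding relational_model_def using pdpi by blast
next
  fix \<pi> assume "\<pi> \<in> relational_model (cells k) (rowsA1 k Fa) matA1"
  then obtain b where pd: "pos_dist (cells k) \<pi>"
    and b: "\<forall>t\<in>cells k. ln (\<pi> t) = (\<Sum>r\<in>rowsA1 k Fa. matA1 r t * b r)"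
    by (auto simp: relational_model_def)
  have Fc: "features k \<in> cells k" using assms by (simp add: cells_def)
  define h where "h i = (\<Sum>W\<in>Fdes k Fa. matA W i * b (Some W))" for i
  define Z where "Z = (\<Sum>i\<in>cells0 k. exp (h i))"
  define E where "E = (\<Sum>i\<in>cells k. exp (h i))"
  define p where "p i = (if i \<in> cells0 k then exp (h i) / Z else 0)" for i
  have Zpos: "Z > 0" unfolding Z_def using Fc cells_cells0 by (intro sum_pos) auto
  have Epos: "E > 0" unfolding E_def using Fc by (intro sum_pos) auto
  have pdp: "pos_dist (cells0 k) p"
    unfolding pos_dist_def
  proof (intro conjI ballI allI impI)
    fix t assume "t \<in> cells0 k" then show "p t > 0" using Zpos by (simp add: p_def)
  next
    fix t assume "t \<notin> cells0 k" then show "p t = 0" by (simp add: p_def)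
  next
    have "sum p (cells0 k) = (\<Sum>i\<in>cells0 k. exp (h i) / Z)" by (simp add: p_def)
    also have "\<dots> = 1" using Zpos by (simp add: sum_divide_distrib[symmetric] Z_def)
    finally show "sum p (cells0 k) = 1" .
  qed
  define b0 where "b0 r = (case r of None \<Rightarrow> - ln Z | Some W \<Rightarrow> b (Some W))" for r
  have "\<forall>t\<in>cells0 k. ln (p t) = (\<Sum>r\<in>rowsA1 k Fa. matA0 r t * b0 r)"
  proof
    fix t assume t: "t \<in> cells0 k"
    have "ln (p t) = h t - ln Z" using t Zpos by (simp add: p_def ln_div)
    also have "h t = (\<Sum>W\<in>Fdes k Fa. matA0 (Some W) t * b0 (Some W))"
      unfolding h_def by (intro sum.cong refl) (simp add: matA0_Some Fdes_ne b0_def)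
    finally show "ln (p t) = (\<Sum>r\<in>rowsA1 k Fa. matA0 r t * b0 r)"
      by (simp add: S2 matA0_def b0_def)
  qed
  then have pL: "p \<in> LL k Fa"
    unfolding LL_eq[OF assms(1)] relational_model_def using pdp by blast
  have pic: "\<pi> i = exp (b None) * exp (h i)" if "i \<in> cells k" for i
  proof -
    have "\<pi> i > 0" using pd that by (auto simp: pos_dist_def)
    then have "\<pi> i = exp (ln (\<pi> i))" by simp
    also have "ln (\<pi> i) = b None + h i" using b that by (simp add: S2 matA1_def h_def)
    finally show ?thesis by (simp add: exp_add)
  qed
  have "1 = sum \<pi> (cells k)" using pd by (simp add: pos_dist_def)
  also have "\<dots> = exp (b None) * E" unfolding E_def sum_distrib_left using pic by simp
  finally have eb: "exp (b None) = 1 / E" using Epos by (simp add: field_simps)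
  have Sp: "(\<Sum>j\<in>cells k. p j) = E / Z"
    unfolding E_def sum_divide_distrib using cells_cells0 by (intro sum.cong refl) (auto simp: p_def)
  have "\<forall>i. \<pi> i = (if i \<in> cells k then p i / (\<Sum>j\<in>cells k. p j) else 0)"
  proof
    fix i show "\<pi> i = (if i \<in> cells k then p i / (\<Sum>j\<in>cells k. p j) else 0)"
    proof (cases "i \<in> cells k")
      case True
      then show ?thesis using pic[OF True] eb Sp cells_cells0 Zpos Epos by (auto simp: p_def)
    next
      case False
      then show ?thesis using pd by (simp add: pos_dist_def)
    qed
  qed
  then show "\<pi> \<in> QLL k Fa" unfolding QLL_def using pL by blast
qed


theorem theorem5:
  fixes k :: nat and Fa :: "nat set set"
  assumes "ascending_class k Fa"
    and "Fa \<noteq> {}"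
    and "{} \<notin> Fa"
  shows "HAS k Fa = relational_model (cells k) (rowsA k Fa) matA \<and>
         QLL k Fa = relational_model (cells k) (rowsA1 k Fa) matA1 \<and>
         LL k Fa = relational_model (cells0 k) (rowsA1 k Fa) matA0 \<and>
         degrees_of_freedom (cells k) (rowsA k Fa) matA = card Fa \<and>
         degrees_of_freedom (cells0 k) (rowsA1 k Fa) matA0 = card Fa \<and>
         degrees_of_freedom (cells k) (rowsA1 k Fa) matA1 = card Fa - 1"
proof -
  have asc: "Fa \<subseteq> Pow (features k)" "\<And>V W. V \<in> Fa \<Longrightarrow> V \<subseteq> W \<Longrightarrow> W \<subseteq> features k \<Longrightarrow> W \<in> Fa"
    using assms(1) unfolding ascending_class_def by blast+
  obtain V where "V \<in> Fa" using assms(2) by blast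
  then have FFa: "features k \<in> Fa" using asc by blast
  then have Fne: "features k \<noteq> {}" using assms(3) by auto
  have Fdes_cells: "Fdes k Fa \<subseteq> cells k" by (auto simp: Fdes_def cells_def)
  have FnFdes: "features k \<notin> Fdes k Fa" using FFa by (simp add: Fdes_def)
  have c0: "card (cells0 k) = 2 ^ k" by (simp add: cells0_def card_Pow features_def)
  have c1: "card (cells k) = 2 ^ k - 1" by (simp add: cells_def card_Pow features_def)
  have PF: "Pow (features k) = Fa \<union> insert {} (Fdes k Fa)" using asc(1) by (auto simp: Fdes_def)
  have "(2::nat) ^ k = card (Pow (features k))" by (simp add: card_Pow features_def)
  also have "\<dots> = card (Fa \<union> insert {} (Fdes k Fa))" using PF by (rule arg_cong)
  also have "\<dots> = card Fa + card (insert {} (Fdes k Fa))"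
    using asc(1) assms(3) by (intro card_Un_disjoint) (auto simp: Fdes_def intro: finite_subset)
  also have "card (insert {} (Fdes k Fa)) = card (Fdes k Fa) + 1"
    by (subst card_insert_disjoint) (auto simp: Fdes_def)
  finally have cnt: "2 ^ k = card Fa + card (Fdes k Fa) + 1" by simp
  have cR1: "card (rowsA1 k Fa) = card (Fdes k Fa) + 1"
    unfolding rowsA1_def by (simp add: card_image)
  have finR1: "finite (rowsA1 k Fa)" by (simp add: rowsA1_def)
  have rA: "mat_rank (cells k) (rowsA k Fa) matA = card (Fdes k Fa)"
    unfolding rowsA_def
  proof (rule rank_indep[OF finite_Fdes])
    fix b assume "\<forall>t\<in>cells k. (\<Sum>r\<in>Fdes k Fa. b r * matA r t) = 0"
    then show "\<forall>r\<in>Fdes k Fa. b r = 0" by (rule L1[OF finite_Fdes Fdes_cells])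
  qed
  have rA0: "mat_rank (cells0 k) (rowsA1 k Fa) matA0 = card (rowsA1 k Fa)"
  proof (rule rank_indep[OF finR1])
    fix b assume z: "\<forall>t\<in>cells0 k. (\<Sum>r\<in>rowsA1 k Fa. b r * matA0 r t) = 0"
    have z': "b None + (\<Sum>W\<in>Fdes k Fa. b (Some W) * matA W t) = 0" if "t \<in> cells0 k" for t
    proof -
      have "(\<Sum>W\<in>Fdes k Fa. b (Some W) * matA0 (Some W) t) = (\<Sum>W\<in>Fdes k Fa. b (Some W) * matA W t)"
        by (intro sum.cong refl) (simp add: matA0_Some Fdes_ne)
      then show ?thesis using z[rule_format, OF that] by (simp add: S2 matA0_None)
    qed
    have "{} \<in> cells0 k" by (simp add: cells0_def)
    from z'[OF this] have bN: "b None = 0"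
      by (simp add: matA_def Fdes_ne sum.neutral)
    have "\<forall>i\<in>cells k. (\<Sum>W\<in>Fdes k Fa. b (Some W) * matA W i) = 0"
      using z' bN cells_cells0 by auto
    then have "\<forall>W\<in>Fdes k Fa. b (Some W) = 0" by (rule L1[OF finite_Fdes Fdes_cells])
    then show "\<forall>r\<in>rowsA1 k Fa. b r = 0" using bN by (auto simp: rowsA1_def)
  qed
  have rA1: "mat_rank (cells k) (rowsA1 k Fa) matA1 = card (rowsA1 k Fa)"
  proof (rule rank_indep[OF finR1])
    fix b assume z: "\<forall>t\<in>cells k. (\<Sum>r\<in>rowsA1 k Fa. b r * matA1 r t) = 0"
    have z': "\<forall>t\<in>cells k. b None + (\<Sum>W\<in>Fdes k Fa. b (Some W) * matA W t) = 0"
      using z by (simp add: S2 matA1_def)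
    have bN: "b None = 0"
      by (rule ones_indep[OF Fne finite_Fdes Fdes_cells FnFdes z'])
    have "\<forall>i\<in>cells k. (\<Sum>W\<in>Fdes k Fa. b (Some W) * matA W i) = 0"
      using z' bN by auto
    then have "\<forall>W\<in>Fdes k Fa. b (Some W) = 0" by (rule L1[OF finite_Fdes Fdes_cells])
    then show "\<forall>r\<in>rowsA1 k Fa. b r = 0" using bN by (auto simp: rowsA1_def)
  qed
  show ?thesis
    using HAS_eq[of k Fa] QLL_eq[OF assms(3) Fne] LL_eq[OF assms(3), of k] rA rA0 rA1 c0 c1 cR1 cnt
    by (simp add: degrees_of_freedom_def rowsA_def)
qed

end
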